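(* Let $N$ and $M$ be large positive parameters, let $\mathcal{X}$ be any subset of $\{1,2,\ldots,10^M\}$, and let $\Delta=\Delta(N)$ be any function with $\Delta\to\infty$. For a prime $p$, let $J_p$ be the number of solutions of $$x\equiv y\pmod p;\qquad x,y\in\mathcal{X}.$$ Then for $\pi(N)\bigl(1+O(1/\Delta)\bigr)$ primes $p\le N$ we have $$J_p=|\mathcal{X}|+O\!\left(\frac{|\mathcal{X}|^2 M}{\pi(N)\log M}\,\Delta\right).$$
   Context: $\pi(N)$ denotes the number of primes $p\le N$. *)

theory Defs
  imports "HOL-Computational_Algebra.Primes" "HOL-Number_Theory.Cong" Complex_Main
begin

definition prime_pi :: "nat \<Rightarrow> nat" where
  "prime_pi N = card {p. prime p \<and> p \<le> N}"

definition Jcount :: "nat set \<Rightarrow> nat \<Rightarrow> nat" where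
  "Jcount X p = card {(x, y). x \<in> X \<and> y \<in> X \<and> [x = y] (mod p)}"

end

theory Submission
  imports Defs
begin

lemma prod_pf_le:
  fixes n :: nat assumes "n > 0"
  shows "(\<Prod>p\<in>{p. prime p \<and> p dvd n}. p) \<le> n"
proof -
  have "(\<Prod>p\<in>prime_factors n. p) \<le> (\<Prod>p \<in> prime_factors n. p ^ multiplicity p n)"
  proof (rule prod_mono)
    fix p assume p: "p \<in> prime_factors n"
    then have "multiplicity p n > 0" by (simp add: prime_factors_multiplicity)
    moreover have "p > 0" using p by (simp add: prime_factors_multiplicity prime_gt_0_nat)
    ultimately show "0 \<le> p \<and> p \<le> p ^ multiplicity p n"
      by (simp add: self_le_power)
  qed
  also have "\<dots> = n" using assms by (simp add: prod_prime_factors)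
  finally show ?thesis using assms by (simp add: prime_factors_dvd)
qed

lemma prod_ge_pow:
  fixes S :: "nat set" and t :: nat
  assumes "finite S" "\<forall>x\<in>S. x \<ge> 1" "t \<ge> 1"
  shows "t ^ (card S - t) \<le> (\<Prod>x\<in>S. x)"
proof -
  let ?A = "S \<inter> {..<t}" and ?B = "S - {..<t}"
  have cA: "card ?A \<le> t" using card_mono[of "{..<t}" ?A] by auto
  have cB: "card ?B \<ge> card S - t"
    using card_Diff_subset_Int[of S "{..<t}"] assms(1) cA
    by (metis Diff_Diff_Int card_Diff_subset_Int diff_le_mono2 finite_Diff)
  have "t ^ (card S - t) \<le> t ^ card ?B" using cB assms(3) by (simp add: power_increasing)
  also have "\<dots> = (\<Prod>x\<in>?B. t)" by simp
  also have "\<dots> \<le> (\<Prod>x\<in>?B. x)" by (rule prod_mono) auto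
  also have "\<dots> \<le> (\<Prod>x\<in>?A. x) * (\<Prod>x\<in>?B. x)"
  proof -
    have "1 \<le> (\<Prod>x\<in>?A. x)" using assms(2) by (intro prod_ge_1) auto
    then show ?thesis by simp
  qed
  also have "\<dots> = (\<Prod>x\<in>S. x)"
    using assms(1) by (metis Int_Diff_Un Int_Diff_disjoint finite_Int finite_Diff prod.union_disjoint)
  finally show ?thesis .
qed

lemma real_bound:
  fixes t M :: real
  assumes t: "t \<ge> 1" and M: "M \<ge> 2" and h: "t * ln t \<le> M * ln 10"
  shows "t \<le> 18 * M / ln M"
proof -
  have lnM: "ln M > 0" using M by simp
  have l10: "ln 10 \<le> (9::real)" using ln_le_minus_one[of 10] by simp
  have "M * ln 10 \<le> M * 9" using l10 M by (intro mult_left_mono) auto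
  then have h2: "t * ln t \<le> 9 * M" using h by linarith
  have sM: "sqrt M > 0" using M by simp
  show ?thesis
  proof (cases "t \<ge> sqrt M")
    case True
    have "ln t \<ge> ln (sqrt M)" using True sM t by (subst ln_le_cancel_iff) auto
    also have "ln (sqrt M) = ln M / 2" using M by (simp add: ln_sqrt)
    finally have "t * (ln M / 2) \<le> t * ln t" using t by (intro mult_left_mono) auto
    with h2 have "t * ln M \<le> 18 * M" by simp
    then show ?thesis using lnM by (simp add: field_simps)
  next
    case False
    have "ln (sqrt M) \<le> sqrt M" using sM ln_le_minus_one[of "sqrt M"] by simp
    then have "ln M \<le> 2 * sqrt M" using M by (simp add: ln_sqrt)
    then have "sqrt M * ln M \<le> sqrt M * (2 * sqrt M)" using sM by (intro mult_left_mono) auto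
    also have "\<dots> = 2 * M" using M by simp
    finally have "sqrt M \<le> 2 * M / ln M" using lnM by (simp add: field_simps)
    also have "\<dots> \<le> 18 * M / ln M" using lnM M by (simp add: divide_right_mono)
    finally show ?thesis using False by simp
  qed
qed

lemma omega_bound:
  fixes n M :: nat assumes n: "0 < n" "n < 10^M" and M: "M \<ge> 2"
  shows "real (card {p. prime p \<and> p dvd n}) \<le> 37 * real M / ln (real M)"
proof -
  let ?S = "{p. prime p \<and> p dvd n}"
  define k where "k = card ?S"
  have fin: "finite ?S" using n by (simp add: prime_factors_dvd[symmetric])
  have lnM: "ln (real M) > 0" using M by simp
  have MlnM: "real M / ln (real M) \<ge> 1"
    using lnM ln_le_minus_one[of "real M"] M by (simp add: field_simps)
  show ?thesis
  proof (cases "k \<ge> 2")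
    case False
    then have "real k \<le> 1" by simp
    also have "\<dots> \<le> 37 * real M / ln (real M)" using MlnM by simp
    finally show ?thesis by (simp add: k_def)
  next
    case True
    define t where "t = k div 2"
    have t1: "t \<ge> 1" using True by (simp add: t_def)
    have "t ^ (k - t) \<le> (\<Prod>x\<in>?S. x)"
      unfolding k_def using prod_ge_pow[OF fin _ t1] prime_ge_1_nat by auto
    also have "\<dots> \<le> n" by (rule prod_pf_le[OF n(1)])
    finally have "t ^ (k - t) < 10 ^ M" using n(2) by simp
    moreover have "t ^ t \<le> t ^ (k - t)" using t1 by (intro power_increasing) (auto simp: t_def)
    ultimately have "t ^ t < (10::nat) ^ M" by simp
    then have "real t ^ t < 10 ^ M" by (metis of_nat_less_iff of_nat_numeral of_nat_power)
    then have "ln (real t ^ t) < ln (10 ^ M)" using t1 by (subst ln_less_cancel_iff) auto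
    then have "real t * ln (real t) \<le> real M * ln 10" using t1 by (simp add: ln_realpow)
    from real_bound[OF _ _ this] t1 M have "real t \<le> 18 * real M / ln (real M)" by simp
    moreover have "real k \<le> 2 * real t + 1" by (simp add: t_def)
    ultimately have "real k \<le> 36 * real M / ln (real M) + 1" by simp
    also have "\<dots> \<le> 37 * real M / ln (real M)" using MlnM by simp
    finally show ?thesis by (simp add: k_def)
  qed
qed

lemma cong_dvd_dist:
  fixes x y p :: nat
  shows "[x = y] (mod p) \<longleftrightarrow> p dvd nat \<bar>int x - int y\<bar>"
proof -
  have "[x = y] (mod p) \<longleftrightarrow> [int x = int y] (mod int p)" by (simp add: cong_int_iff)
  also have "\<dots> \<longleftrightarrow> int p dvd (int x - int y)" by (simp add: cong_iff_dvd_diff)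
  also have "\<dots> \<longleftrightarrow> int p dvd \<bar>int x - int y\<bar>" by simp
  also have "\<dots> \<longleftrightarrow> p dvd nat \<bar>int x - int y\<bar>"
    by (metis abs_ge_zero int_dvd_int_iff nat_0_le)
  finally show ?thesis .
qed

lemma J_decomp:
  fixes X :: "nat set" assumes fin: "finite X"
  shows "Jcount X p = card X + card {z\<in>{z \<in> X \<times> X. fst z \<noteq> snd z}. [fst z = snd z] (mod p)}"
proof -
  let ?O = "{z\<in>{z \<in> X \<times> X. fst z \<noteq> snd z}. [fst z = snd z] (mod p)}"
  let ?I = "(\<lambda>x. (x,x)) ` X"
  have eq: "{(x, y). x \<in> X \<and> y \<in> X \<and> [x = y] (mod p)} = ?I \<union> ?O"
  proof (rule set_eqI)
    fix z :: "nat \<times> nat"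
    obtain x y where z: "z = (x, y)" by (cases z)
    show "z \<in> {(x, y). x \<in> X \<and> y \<in> X \<and> [x = y] (mod p)} \<longleftrightarrow> z \<in> ?I \<union> ?O"
      unfolding z by (cases "x = y") auto
  qed
  have f1: "finite ?I" by (rule finite_imageI[OF fin])
  have sub: "?O \<subseteq> X \<times> X" by blast
  have f2: "finite ?O" by (rule finite_subset[OF sub]) (simp add: fin)
  have dj: "?I \<inter> ?O = {}"
  proof (rule equals0I)
    fix w assume w: "w \<in> ?I \<inter> ?O"
    then obtain x where "w = (x, x)" by blast
    moreover have "fst w \<noteq> snd w" using w by blast
    ultimately show False by simp
  qed
  have "card (?I \<union> ?O) = card ?I + card ?O"
    using f1 f2 dj by (rule card_Un_disjoint)
  also have "card ?I = card X" by (rule card_image) (auto simp: inj_on_def)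
  finally show ?thesis unfolding Jcount_def eq .
qed

lemma sum_off:
  fixes X :: "nat set" and M N :: nat
  assumes X: "X \<subseteq> {1..10^M}" and M: "M \<ge> 2"
  shows "real (\<Sum>p\<in>{p. prime p \<and> p \<le> N}. card {z\<in>{z \<in> X \<times> X. fst z \<noteq> snd z}. [fst z = snd z] (mod p)})
     \<le> real (card X)^2 * (37 * real M / ln (real M))"
proof -
  define D where "D = {z \<in> X \<times> X. fst z \<noteq> snd z}"
  define P where "P = {p. prime p \<and> p \<le> N}"
  define K where "K = 37 * real M / ln (real M)"
  have finX: "finite X" using X finite_subset by blast
  have finD: "finite D" unfolding D_def using finX by simp
  have finP: "finite P" unfolding P_def by simp
  have "(\<Sum>p\<in>P. card {z\<in>D. [fst z = snd z] (mod p)})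
      = (\<Sum>p\<in>P. \<Sum>z\<in>D. if [fst z = snd z] (mod p) then 1 else 0)"
    using finD by (simp add: sum.If_cases Int_def)
  also have "\<dots> = (\<Sum>z\<in>D. \<Sum>p\<in>P. if [fst z = snd z] (mod p) then 1 else 0)"
    by (rule sum.swap)
  also have "\<dots> = (\<Sum>z\<in>D. card {p\<in>P. [fst z = snd z] (mod p)})"
    using finP by (simp add: sum.If_cases Int_def)
  finally have eq: "real (\<Sum>p\<in>P. card {z\<in>D. [fst z = snd z] (mod p)})
      = (\<Sum>z\<in>D. real (card {p\<in>P. [fst z = snd z] (mod p)}))" by simp
  have bnd: "real (card {p\<in>P. [fst z = snd z] (mod p)}) \<le> K" if z: "z \<in> D" for z
  proof -
    obtain x y where xy: "z = (x,y)" "x \<in> X" "y \<in> X" "x \<noteq> y" using z by (auto simp: D_def)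
    define d where "d = nat \<bar>int x - int y\<bar>"
    have d0: "0 < d" using xy by (simp add: d_def)
    have "x \<le> 10^M" "y \<le> 10^M" "x \<ge> 1" "y \<ge> 1" using xy X by auto
    then have dlt: "d < 10^M" unfolding d_def by linarith
    have sub: "{p\<in>P. [fst z = snd z] (mod p)} \<subseteq> {p. prime p \<and> p dvd d}"
      using xy by (auto simp: P_def d_def cong_dvd_dist)
    have "finite {p. prime p \<and> p dvd d}" using d0 by (simp add: prime_factors_dvd[symmetric])
    then have "card {p\<in>P. [fst z = snd z] (mod p)} \<le> card {p. prime p \<and> p dvd d}"
      using sub card_mono by blast
    then have "real (card {p\<in>P. [fst z = snd z] (mod p)}) \<le> real (card {p. prime p \<and> p dvd d})" by simp
    also have "\<dots> \<le> K" unfolding K_def by (rule omega_bound[OF d0 dlt M])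
    finally show ?thesis .
  qed
  have "(\<Sum>z\<in>D. real (card {p\<in>P. [fst z = snd z] (mod p)})) \<le> (\<Sum>z\<in>D. K)"
    by (rule sum_mono) (rule bnd)
  also have "\<dots> = real (card D) * K" by simp
  also have "\<dots> \<le> real (card X)^2 * K"
  proof -
    have "card D \<le> card (X \<times> X)" unfolding D_def using finX by (intro card_mono) auto
    then have "real (card D) \<le> real (card X)^2" by (metis card_cartesian_product of_nat_le_iff of_nat_mult power2_eq_square)
    moreover have "K \<ge> 0" unfolding K_def using M by simp
    ultimately show ?thesis by (rule mult_right_mono)
  qed
  finally have "real (\<Sum>p\<in>P. card {z\<in>D. [fst z = snd z] (mod p)}) \<le> real (card X)^2 * K"
    using eq by simp
  then show ?thesis unfolding D_def P_def K_def .
qed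

theorem lemma5:
  "\<exists>C::real. C > 0 \<and> (\<exists>M0::nat. \<forall>\<Delta>::nat \<Rightarrow> real. filterlim \<Delta> at_top at_top \<longrightarrow>
     (\<exists>N0::nat. \<forall>N \<ge> N0. \<forall>M \<ge> M0. \<forall>X. X \<subseteq> {1..10^M} \<longrightarrow>
        real (card {p. prime p \<and> p \<le> N \<and>
            \<bar>real (Jcount X p) - real (card X)\<bar>
              \<le> C * (real (card X))^2 * real M * \<Delta> N / (real (prime_pi N) * ln (real M))})
        \<ge> real (prime_pi N) - C * real (prime_pi N) / \<Delta> N))"
proof (rule exI[of _ "37::real"], rule conjI, simp, rule exI[of _ "2::nat"], intro allI impI)
  fix \<Delta> :: "nat \<Rightarrow> real" assume lim: "filterlim \<Delta> at_top at_top"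
  then have "eventually (\<lambda>N. \<Delta> N \<ge> 1) at_top" by (simp add: filterlim_at_top)
  then obtain N0 where N0: "\<And>N. N \<ge> N0 \<Longrightarrow> \<Delta> N \<ge> 1" by (auto simp: eventually_at_top_linorder)
  show "\<exists>N0. \<forall>N\<ge>N0. \<forall>M\<ge>2. \<forall>X. X \<subseteq> {1..10 ^ M} \<longrightarrow>
        real (prime_pi N) - 37 * real (prime_pi N) / \<Delta> N \<le>
        real (card {p. prime p \<and> p \<le> N \<and>
            \<bar>real (Jcount X p) - real (card X)\<bar>
              \<le> 37 * (real (card X))^2 * real M * \<Delta> N / (real (prime_pi N) * ln (real M))})"
  proof (rule exI[of _ N0], intro allI impI)
    fix N M :: nat and X :: "nat set"
    assume N: "N \<ge> N0" and M: "M \<ge> 2" and X: "X \<subseteq> {1..10^M}"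
    define P where "P = {p. prime p \<and> p \<le> N}"
    define pi where "pi = real (prime_pi N)"
    define K where "K = 37 * real M / ln (real M)"
    define T where "T = 37 * (real (card X))^2 * real M * \<Delta> N / (real (prime_pi N) * ln (real M))"
    define Off where "Off = (\<lambda>p. card {z\<in>{z \<in> X \<times> X. fst z \<noteq> snd z}. [fst z = snd z] (mod p)})"
    define G where "G = {p. prime p \<and> p \<le> N \<and> \<bar>real (Jcount X p) - real (card X)\<bar> \<le> T}"
    define B where "B = P - G"
    have D1: "\<Delta> N \<ge> 1" using N0 N by simp
    have finX: "finite X" using X finite_subset by blast
    have finP: "finite P" unfolding P_def by simp
    have pi_def': "pi = real (card P)" by (simp add: pi_def P_def prime_pi_def)
    have GP: "G \<subseteq> P" by (auto simp: G_def P_def)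
    have cardG: "real (card G) = pi - real (card B)"
      unfolding B_def pi_def' using GP finP
      by (simp add: card_Diff_subset finite_subset of_nat_diff card_mono)
    have Jeq: "\<bar>real (Jcount X p) - real (card X)\<bar> = real (Off p)" for p
      using J_decomp[OF finX, of p] by (simp add: Off_def)
    have sumb0: "real (\<Sum>p\<in>P. Off p) \<le> real (card X)^2 * K"
      unfolding Off_def P_def K_def by (rule sum_off[OF X M, of N])
    have sumb: "(\<Sum>p\<in>P. real (Off p)) \<le> real (card X)^2 * K"
      using sumb0 by (simp only: of_nat_sum)
    have Bbnd: "real (card B) \<le> 37 * pi / \<Delta> N"
    proof (cases "B = {}")
      case True
      then show ?thesis using D1 by (simp add: pi_def)
    next
      case False
      then obtain p0 where p0: "p0 \<in> B" by auto
      have piP: "pi > 0" using p0 finP unfolding pi_def' B_def by (auto simp: card_gt_0_iff)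
      have lnM: "ln (real M) > 0" using M by simp
      have Tnn: "T \<ge> 0" unfolding T_def using D1 lnM piP pi_def by simp
      have Teq: "T = real (card X)^2 * K * \<Delta> N / pi"
        unfolding T_def K_def pi_def by (simp add: field_simps)
      have Bgt: "T < real (Off p)" if "p \<in> B" for p
        using that unfolding B_def G_def P_def Jeq by auto
      have finB: "finite B" unfolding B_def using finP by simp
      have "real (card B) * T = (\<Sum>p\<in>B. T)" by simp
      also have "\<dots> \<le> (\<Sum>p\<in>B. real (Off p))" using Bgt by (intro sum_mono) (auto intro: less_imp_le)
      also have "\<dots> \<le> (\<Sum>p\<in>P. real (Off p))"
        using finP by (intro sum_mono2) (auto simp: B_def)
      also have "\<dots> \<le> real (card X)^2 * K" by (rule sumb)
      finally have main: "real (card B) * T \<le> real (card X)^2 * K" .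
      have "0 \<le> T" by (rule Tnn)
      also have "T < real (Off p0)" by (rule Bgt[OF p0])
      also have "\<dots> \<le> (\<Sum>p\<in>P. real (Off p))"
        using finP p0 by (intro member_le_sum) (auto simp: B_def)
      also have "\<dots> \<le> real (card X)^2 * K" by (rule sumb)
      finally have XK: "real (card X)^2 * K > 0" .
      from main have "(real (card X)^2 * K) * (real (card B) * (\<Delta> N / pi)) \<le> (real (card X)^2 * K) * 1"
        by (simp add: Teq mult_ac)
      then have "real (card B) * (\<Delta> N / pi) \<le> 1"
        using XK mult_le_cancel_left_pos by blast
      then have "real (card B) \<le> pi / \<Delta> N" using D1 piP by (simp add: field_simps)
      also have "\<dots> \<le> 37 * pi / \<Delta> N" using D1 piP by (simp add: divide_right_mono)
      finally show ?thesis .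
    qed
    show "real (prime_pi N) - 37 * real (prime_pi N) / \<Delta> N \<le>
        real (card {p. prime p \<and> p \<le> N \<and>
            \<bar>real (Jcount X p) - real (card X)\<bar>
              \<le> 37 * (real (card X))^2 * real M * \<Delta> N / (real (prime_pi N) * ln (real M))})"
      using cardG Bbnd unfolding G_def T_def pi_def by linarith
  qed
qed

end
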